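(* Let $\lambda_1(\varepsilon),\ldots,\lambda_n(\varepsilon)$ be real functions with $\lambda_k(\varepsilon)=\varepsilon^{L_k}(\widetilde\lambda_k+\mathcal{O}(\varepsilon))$ as $\varepsilon\to0$, for integers $0\le L_1\le\cdots\le L_n$, and let $e_j(\varepsilon)=e_j(\lambda_1(\varepsilon),\ldots,\lambda_n(\varepsilon))=\varepsilon^{L_1+\cdots+L_j}(\widetilde e_j+\mathcal{O}(\varepsilon))$. Set $L_0=-1$ and $L_{n+1}=+\infty$. Suppose that for some $s\ge0$ and $1\le m\le n-s$, \[L_s<L_{s+1}=\cdots=L_{s+m}<L_{s+m+1}.\] Then for $1\le k\le m$, \[\widetilde e_{s+k}=\begin{cases}e_k(\widetilde\lambda_{s+1},\ldots,\widetilde\lambda_{s+m}),& s=0,\\ \widetilde\lambda_1\cdots\widetilde\lambda_s\,e_k(\widetilde\lambda_{s+1},\ldots,\widetilde\lambda_{s+m})=\widetilde e_s\,e_k(\widetilde\lambda_{s+1},\ldots,\widetilde\lambda_{s+m}),& s>0.\end{cases}\] In particular, if $s>1$ and $\widetilde e_s\ne0$, then $e_k(\widetilde\lambda_{s+1},\ldots,\widetilde\lambda_{s+m})=\widetilde e_{s+k}/\widetilde e_s$ for $1\le k\le m$, hence $\widetilde\lambda_{s+1},\ldots,\widetilde\lambda_{s+m}$ are the roots of the polynomial $q(\lambda)=\sum_{j=0}^m(-1)^j\widetilde e_{s+j}\lambda^{m-j}$.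
   Context: The $k$-th elementary symmetric polynomial is $e_k(\mu_1,\ldots,\mu_m)=\sum_{\mathcal{Y}\subset\{1,\ldots,m\},\,\#\mathcal{Y}=k}\prod_{i\in\mathcal{Y}}\mu_i$. The constants $\widetilde e_j$ denote the main-term coefficients of $e_j(\varepsilon)$ as displayed. *)

theory Defs
  imports "HOL-Library.Landau_Symbols" "HOL-Computational_Algebra.Polynomial"
begin

definition esym :: "nat set \<Rightarrow> (nat \<Rightarrow> real) \<Rightarrow> nat \<Rightarrow> real" where
  "esym I mu k = (\<Sum>Y\<in>{Y. Y \<subseteq> I \<and> card Y = k}. \<Prod>i\<in>Y. mu i)"

end

theory Submission imports Defs begin

lemma pow_bigo:
  assumes "b \<le> a"
  shows "(\<lambda>x::real. x ^ a) \<in> O[at 0](\<lambda>x. x ^ b)"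
proof (rule bigoI[where c=1])
  have "eventually (\<lambda>x::real. dist x 0 < 1) (at 0)"
    using tendstoD[OF tendsto_ident_at, of 1 "0::real" UNIV] by simp
  then show "\<forall>\<^sub>F x in at 0. norm (x ^ a) \<le> 1 * norm ((x::real) ^ b)"
  proof eventually_elim
    case (elim x)
    then have "\<bar>x\<bar> \<le> 1" by simp
    then have "\<bar>x\<bar> ^ a \<le> \<bar>x\<bar> ^ b" using assms by (intro power_decreasing) auto
    then show ?case by (simp add: power_abs)
  qed
qed

lemma pow_mult_fun: "(\<lambda>x::real. x ^ a * x ^ b) = (\<lambda>x. x ^ (a + b))"
  by (simp add: power_add)

lemma const_pow_bigo: "(\<lambda>x::real. x ^ a * c) \<in> O[at 0](\<lambda>x. x ^ a)"
  by (cases "c = 0") simp_all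

lemma prod_asym:
  fixes f :: "nat \<Rightarrow> real \<Rightarrow> real" and L :: "nat \<Rightarrow> nat" and c :: "nat \<Rightarrow> real"
  assumes "finite Y"
    and "\<And>i. i \<in> Y \<Longrightarrow> (\<lambda>x. f i x - x ^ L i * c i) \<in> O[at 0](\<lambda>x. x ^ (L i + 1))"
  shows "(\<lambda>x. (\<Prod>i\<in>Y. f i x) - x ^ (\<Sum>i\<in>Y. L i) * (\<Prod>i\<in>Y. c i))
          \<in> O[at 0](\<lambda>x. x ^ ((\<Sum>i\<in>Y. L i) + 1))"
  using assms
proof (induction Y rule: finite_induct)
  case empty
  then show ?case by simp
next
  case (insert i Y)
  define S where "S = (\<Sum>i\<in>Y. L i)"
  have IH: "(\<lambda>x. (\<Prod>i\<in>Y. f i x) - x ^ S * (\<Prod>i\<in>Y. c i)) \<in> O[at 0](\<lambda>x. x ^ (S + 1))"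
    using insert S_def by auto
  have ai: "(\<lambda>x. f i x - x ^ L i * c i) \<in> O[at 0](\<lambda>x. x ^ (L i + 1))"
    using insert by auto
  have b1: "(\<lambda>x::real. x ^ (S + 1)) \<in> O[at 0](\<lambda>x. x ^ S)" using pow_bigo[of S "S+1"] by simp
  have bB: "(\<lambda>x. x ^ S * (\<Prod>i\<in>Y. c i)) \<in> O[at 0](\<lambda>x. x ^ S)" by (rule const_pow_bigo)
  have b: "(\<lambda>x. (\<Prod>i\<in>Y. f i x)) \<in> O[at 0](\<lambda>x. x ^ S)"
  proof -
    have "(\<lambda>x. ((\<Prod>i\<in>Y. f i x) - x ^ S * (\<Prod>i\<in>Y. c i)) + x ^ S * (\<Prod>i\<in>Y. c i)) \<in> O[at 0](\<lambda>x. x ^ S)"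
      by (rule sum_in_bigo(1)[OF landau_o.big_trans[OF IH b1] bB])
    then show ?thesis by simp
  qed
  have t1: "(\<lambda>x. (f i x - x ^ L i * c i) * (\<Prod>i\<in>Y. f i x)) \<in> O[at 0](\<lambda>x. x ^ (L i + S + 1))"
    using landau_o.big.mult[OF ai b] by (simp add: power_add mult_ac)
  have t2: "(\<lambda>x. (x ^ L i * c i) * ((\<Prod>i\<in>Y. f i x) - x ^ S * (\<Prod>i\<in>Y. c i))) \<in> O[at 0](\<lambda>x. x ^ (L i + S + 1))"
  proof -
    have m: "(\<lambda>x. (x ^ L i * c i) * ((\<Prod>i\<in>Y. f i x) - x ^ S * (\<Prod>i\<in>Y. c i))) \<in> O[at 0](\<lambda>x. x ^ L i * x ^ (S + 1))"
      by (rule landau_o.big.mult[OF const_pow_bigo IH])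
    have "(\<lambda>x::real. x ^ L i * x ^ (S + 1)) = (\<lambda>x. x ^ (L i + S + 1))" by (simp add: power_add mult_ac)
    with m show ?thesis by simp
  qed
  have eq: "(\<lambda>x. (\<Prod>i\<in>insert i Y. f i x) - x ^ (\<Sum>i\<in>insert i Y. L i) * (\<Prod>i\<in>insert i Y. c i))
     = (\<lambda>x. (f i x - x ^ L i * c i) * (\<Prod>i\<in>Y. f i x) + (x ^ L i * c i) * ((\<Prod>i\<in>Y. f i x) - x ^ S * (\<Prod>i\<in>Y. c i)))"
    using insert by (auto simp: S_def power_add algebra_simps)
  show ?case unfolding eq using sum_in_bigo(1)[OF t1 t2] insert by (simp add: S_def)
qed

lemma coeff_zero:
  fixes d :: real
  assumes "(\<lambda>x. x ^ S * d) \<in> O[at 0](\<lambda>x. x ^ (S + 1))"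
  shows "d = 0"
proof (rule ccontr)
  assume d: "d \<noteq> 0"
  from assms obtain c where c: "c > 0" and ev: "\<forall>\<^sub>F x in at 0. norm (x ^ S * d) \<le> c * norm ((x::real) ^ (S + 1))"
    by (elim landau_o.bigE)
  have ev2: "\<forall>\<^sub>F x in at (0::real). dist x 0 < \<bar>d\<bar> / c"
    using tendstoD[OF tendsto_ident_at, of "\<bar>d\<bar> / c" "0::real" UNIV] c d by simp
  have ev3: "\<forall>\<^sub>F x in at (0::real). x \<noteq> 0" by (simp add: eventually_at_filter)
  have "\<forall>\<^sub>F x in at (0::real). False"
    using ev ev2 ev3
  proof eventually_elim
    case (elim x)
    have "\<bar>x\<bar> ^ S * \<bar>d\<bar> \<le> c * (\<bar>x\<bar> ^ S * \<bar>x\<bar>)" using elim(1) by (simp add: abs_mult power_abs mult_ac)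
    then have "\<bar>d\<bar> \<le> c * \<bar>x\<bar>" using elim(3) by (simp add: mult.assoc mult.left_commute[of c])
    moreover have "c * \<bar>x\<bar> < \<bar>d\<bar>" using elim(2) c by (simp add: field_simps)
    ultimately show False by simp
  qed
  then show False by (simp add: eventually_False)
qed

lemma esym0: "finite I \<Longrightarrow> esym I f 0 = 1"
proof -
  assume "finite I"
  then have "{Y. Y \<subseteq> I \<and> card Y = 0} = {{}}" by (auto dest: finite_subset)
  then show ?thesis by (simp add: esym_def)
qed

lemma smult_sum2: "smult a (sum f A) = (\<Sum>i\<in>A. smult a (f i))"
  by (induct A rule: infinite_finite_induct) (auto simp: smult_add_right)

lemma vieta:
  fixes x :: "nat \<Rightarrow> real"
  assumes I: "finite I"
  shows "(\<Prod>i\<in>I. [:- x i, 1:]) = (\<Sum>j\<le>card I. monom ((-1) ^ j * esym I x j) (card I - j))"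
proof -
  have "(\<Prod>i\<in>I. [:- x i, 1:]) = (\<Prod>i\<in>I. [:- x i:] + [:0, 1:])" by simp
  also have "\<dots> = (\<Sum>X\<in>Pow I. (\<Prod>i\<in>X. [:- x i:]) * (\<Prod>i\<in>I - X. [:0, 1:]))"
    by (rule prod_add[OF I])
  also have "\<dots> = (\<Sum>X\<in>Pow I. monom ((-1) ^ card X * (\<Prod>i\<in>X. x i)) (card I - card X))"
  proof (rule sum.cong[OF refl])
    fix X assume X: "X \<in> Pow I"
    then have fX: "finite X" using I finite_subset by auto
    have "(\<Prod>i\<in>X. [:- x i:]) = [:(-1) ^ card X * (\<Prod>i\<in>X. x i):]"
      by (simp add: prod_to_poly prod_uminus)
    moreover have "card (I - X) = card I - card X" using X fX by (simp add: card_Diff_subset)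
    ultimately show "(\<Prod>i\<in>X. [:- x i:]) * (\<Prod>i\<in>I - X. [:0, 1:]) = monom ((-1) ^ card X * (\<Prod>i\<in>X. x i)) (card I - card X)"
      by (simp add: monom_altdef)
  qed
  also have "\<dots> = (\<Sum>j\<le>card I. \<Sum>X\<in>{X. X \<in> Pow I \<and> card X = j}. monom ((-1) ^ card X * (\<Prod>i\<in>X. x i)) (card I - card X))"
    by (rule sum.group[symmetric]) (use I in \<open>auto intro: card_mono\<close>)
  also have "\<dots> = (\<Sum>j\<le>card I. monom ((-1) ^ j * esym I x j) (card I - j))"
  proof (rule sum.cong[OF refl])
    fix j
    have e: "{X. X \<in> Pow I \<and> card X = j} = {Y. Y \<subseteq> I \<and> card Y = j}" by auto
    have "(\<Sum>X\<in>{X. X \<in> Pow I \<and> card X = j}. monom ((-1) ^ card X * (\<Prod>i\<in>X. x i)) (card I - card X))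
        = (\<Sum>X\<in>{Y. Y \<subseteq> I \<and> card Y = j}. monom ((-1) ^ j * (\<Prod>i\<in>X. x i)) (card I - j))"
      unfolding e by (rule sum.cong) auto
    also have "\<dots> = monom ((-1) ^ j * esym I x j) (card I - j)"
      by (simp add: esym_def monom_sum sum_distrib_left)
    finally show "(\<Sum>X\<in>{X. X \<in> Pow I \<and> card X = j}. monom ((-1) ^ card X * (\<Prod>i\<in>X. x i)) (card I - card X))
        = monom ((-1) ^ j * esym I x j) (card I - j)" .
  qed
  finally show ?thesis .
qed

lemma sum_ge_card:
  fixes f :: "nat \<Rightarrow> nat"
  assumes "finite A" "\<And>a. a \<in> A \<Longrightarrow> c \<le> f a"
  shows "card A * c \<le> sum f A"
  using sum_mono[of A "\<lambda>_. c" f] assms by simp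

lemma sum_le_card:
  fixes f :: "nat \<Rightarrow> nat"
  assumes "finite A" "\<And>a. a \<in> A \<Longrightarrow> f a \<le> c"
  shows "sum f A \<le> card A * c"
  using sum_mono[of A f "\<lambda>_. c"] assms by simp

lemma sum_gt_card:
  fixes f :: "nat \<Rightarrow> nat"
  assumes "finite A" "\<And>a. a \<in> A \<Longrightarrow> c \<le> f a" "a0 \<in> A" "c < f a0"
  shows "card A * c < sum f A"
  using sum_strict_mono_ex1[of A "\<lambda>_. c" f] assms by force

lemma sum_lt_card:
  fixes f :: "nat \<Rightarrow> nat"
  assumes "finite A" "\<And>a. a \<in> A \<Longrightarrow> f a \<le> c" "a0 \<in> A" "f a0 < c"
  shows "sum f A < card A * c"
  using sum_strict_mono_ex1[of A f "\<lambda>_. c"] assms by force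

lemma exch:
  fixes L :: "nat \<Rightarrow> nat"
  assumes L_mono: "\<And>i j. 1 \<le> i \<Longrightarrow> i \<le> j \<Longrightarrow> j \<le> n \<Longrightarrow> L i \<le> L j"
    and Y: "Y \<subseteq> {1..n}" "card Y = j" and j: "1 \<le> j"
  shows "sum L Y + sum L ({1..j} - Y) = sum L {1..j} + sum L (Y - {1..j})"
    and "card (Y - {1..j}) = card ({1..j} - Y)"
    and "\<And>y. y \<in> Y - {1..j} \<Longrightarrow> L j \<le> L y"
    and "\<And>x. x \<in> {1..j} - Y \<Longrightarrow> L x \<le> L j"
    and "j \<le> n"
proof -
  have fY: "finite Y" using Y finite_subset by auto
  show jn: "j \<le> n" using card_mono[OF _ Y(1)] Y by simp
  have "sum L Y = sum L (Y - Y \<inter> {1..j}) + sum L (Y \<inter> {1..j})"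
    by (rule sum.subset_diff) (use fY in auto)
  moreover have "sum L {1..j} = sum L ({1..j} - Y \<inter> {1..j}) + sum L (Y \<inter> {1..j})"
    by (rule sum.subset_diff) auto
  moreover have "Y - Y \<inter> {1..j} = Y - {1..j}" "{1..j} - Y \<inter> {1..j} = {1..j} - Y" by auto
  ultimately show "sum L Y + sum L ({1..j} - Y) = sum L {1..j} + sum L (Y - {1..j})" by simp
  have "card (Y - {1..j}) = card Y - card (Y \<inter> {1..j})" by (rule card_Diff_subset_Int) simp
  moreover have "card ({1..j} - Y) = card {1..j} - card ({1..j} \<inter> Y)" by (rule card_Diff_subset_Int) (use fY in simp)
  ultimately show "card (Y - {1..j}) = card ({1..j} - Y)" using Y by (simp add: Int_commute)
  show "\<And>y. y \<in> Y - {1..j} \<Longrightarrow> L j \<le> L y" using Y j by (intro L_mono) auto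
  show "\<And>x. x \<in> {1..j} - Y \<Longrightarrow> L x \<le> L j" using jn by (intro L_mono) auto
qed

lemma key:
  fixes n :: nat
    and lam :: "nat \<Rightarrow> real \<Rightarrow> real"
    and L :: "nat \<Rightarrow> nat"
    and lt :: "nat \<Rightarrow> real"
    and et :: "nat \<Rightarrow> real"
  assumes L_mono: "\<And>i j. 1 \<le> i \<Longrightarrow> i \<le> j \<Longrightarrow> j \<le> n \<Longrightarrow> L i \<le> L j"
    and lam_asym: "\<And>k. 1 \<le> k \<Longrightarrow> k \<le> n \<Longrightarrow>
        (\<lambda>\<epsilon>. lam k \<epsilon> - \<epsilon> ^ L k * lt k) \<in> O[at 0](\<lambda>\<epsilon>. \<epsilon> ^ (L k + 1))"
    and e_asym: "\<And>j. 1 \<le> j \<Longrightarrow> j \<le> n \<Longrightarrow>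
        (\<lambda>\<epsilon>. esym {1..n} (\<lambda>i. lam i \<epsilon>) j - \<epsilon> ^ (\<Sum>i=1..j. L i) * et j)
          \<in> O[at 0](\<lambda>\<epsilon>. \<epsilon> ^ ((\<Sum>i=1..j. L i) + 1))"
    and tj: "t \<le> j" and jp: "j \<le> p" and pn: "p \<le> n" and j1: "1 \<le> j"
    and tjp: "t < j \<or> t = p"
    and gl: "t = 0 \<or> L t < L (t + 1)" and gr: "p = n \<or> L p < L (p + 1)"
    and blk: "\<And>i. t + 1 \<le> i \<Longrightarrow> i \<le> p \<Longrightarrow> L i = L (t + 1)"
  shows "et j = (\<Prod>i=1..t. lt i) * esym {t+1..p} lt (j - t)"
proof -
  define S where "S = (\<Sum>i=1..j. L i)"
  define U where "U = {Y. Y \<subseteq> {1..n} \<and> card Y = j}"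
  define M where "M = {Y. Y \<subseteq> {t+1..p} \<and> card Y = j - t}"
  define Mn where "Mn = (\<lambda>Y'. {1..t} \<union> Y') ` M"
  have fU: "finite U" unfolding U_def by (rule finite_subset[of _ "Pow {1..n}"]) auto
  have fM: "finite M" unfolding M_def by (rule finite_subset[of _ "Pow {t+1..p}"]) auto
  have F1: "Mn = {Y\<in>U. {1..t} \<subseteq> Y \<and> Y \<subseteq> {1..p}}"
  proof
    show "Mn \<subseteq> {Y\<in>U. {1..t} \<subseteq> Y \<and> Y \<subseteq> {1..p}}"
    proof
      fix Y assume "Y \<in> Mn"
      then obtain Y' where Y': "Y' \<in> M" "Y = {1..t} \<union> Y'" unfolding Mn_def by auto
      have fY': "finite Y'" using Y' unfolding M_def by (auto dest: finite_subset)
      have d: "{1..t} \<inter> Y' = {}" using Y' unfolding M_def by auto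
      have "card Y = t + card Y'" using Y' d fY' by (simp add: card_Un_disjoint)
      then have "card Y = j" using Y' tj unfolding M_def by simp
      moreover have "Y \<subseteq> {1..p}" using Y' tj jp unfolding M_def by auto
      ultimately show "Y \<in> {Y\<in>U. {1..t} \<subseteq> Y \<and> Y \<subseteq> {1..p}}" using Y' pn unfolding U_def by auto
    qed
  next
    show "{Y\<in>U. {1..t} \<subseteq> Y \<and> Y \<subseteq> {1..p}} \<subseteq> Mn"
    proof
      fix Y assume Y: "Y \<in> {Y\<in>U. {1..t} \<subseteq> Y \<and> Y \<subseteq> {1..p}}"
      have fY: "finite Y" using Y unfolding U_def by (auto dest: finite_subset)
      have "card (Y - {1..t}) = card Y - card {1..t}" using Y by (simp add: card_Diff_subset)
      then have "Y - {1..t} \<in> M" using Y unfolding M_def U_def by auto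
      moreover have "Y = {1..t} \<union> (Y - {1..t})" using Y by auto
      ultimately show "Y \<in> Mn" unfolding Mn_def by blast
    qed
  qed
  have MnU: "Mn \<subseteq> U" using F1 by auto
  have F2: "sum L Y = S" if "Y \<in> Mn" for Y
  proof -
    obtain Y' where Y': "Y' \<in> M" "Y = {1..t} \<union> Y'" using \<open>Y \<in> Mn\<close> unfolding Mn_def by auto
    have fY': "finite Y'" using Y' unfolding M_def by (auto dest: finite_subset)
    have d: "{1..t} \<inter> Y' = {}" using Y' unfolding M_def by auto
    have "sum L Y = sum L {1..t} + sum L Y'" using Y' d fY' by (simp add: sum.union_disjoint)
    also have "sum L Y' = card Y' * L (t + 1)"
    proof -
      have ball: "\<forall>i\<in>Y'. L i = L (t + 1)"
      proof
        fix i assume "i \<in> Y'"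
        then have "t + 1 \<le> i" "i \<le> p" using Y'(1) unfolding M_def by auto
        then show "L i = L (t + 1)" by (rule blk)
      qed
      have "sum L Y' = sum (\<lambda>_. L (t + 1)) Y'" by (rule sum.cong[OF refl]) (use ball in blast)
      then show ?thesis by simp
    qed
    also have "card Y' = j - t" using Y' unfolding M_def by simp
    finally have a: "sum L Y = sum L {1..t} + (j - t) * L (t + 1)" .
    have "{1..j} = {1..t} \<union> {t+1..j}" using tj by auto
    then have "S = sum L {1..t} + sum L {t+1..j}" unfolding S_def by (simp add: sum.union_disjoint)
    also have "sum L {t+1..j} = (j - t) * L (t + 1)"
    proof -
      have ball: "\<forall>i\<in>{t+1..j}. L i = L (t + 1)"
      proof
        fix i assume "i \<in> {t+1..j}"
        then have "t + 1 \<le> i" "i \<le> p" using jp by auto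
        then show "L i = L (t + 1)" by (rule blk)
      qed
      have "sum L {t+1..j} = sum (\<lambda>_. L (t + 1)) {t+1..j}" by (rule sum.cong[OF refl]) (use ball in blast)
      then show ?thesis by simp
    qed
    finally show ?thesis using a by simp
  qed
  have F3: "S + 1 \<le> sum L Y" if Y: "Y \<in> U - Mn" for Y
  proof -
    have YU: "Y \<subseteq> {1..n}" "card Y = j" using Y unfolding U_def by auto
    have fY: "finite Y" using YU finite_subset by auto
    note ex = exch[where L=L and n=n, OF L_mono YU j1]
    have fin: "finite (Y - {1..j})" "finite ({1..j} - Y)" using fY by auto
    have lo: "sum L ({1..j} - Y) \<le> card ({1..j} - Y) * L j"
      by (rule sum_le_card[OF fin(2) ex(4)])
    have hi: "card (Y - {1..j}) * L j \<le> sum L (Y - {1..j})"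
      by (rule sum_ge_card[OF fin(1) ex(3)])
    have nc: "\<not> ({1..t} \<subseteq> Y \<and> Y \<subseteq> {1..p})" using Y F1 by auto
    have cs: "(\<exists>y\<in>Y. p < y) \<or> ((\<exists>x\<in>{1..t}. x \<notin> Y) \<and> Y \<subseteq> {1..p})"
    proof (cases "Y \<subseteq> {1..p}")
      case True
      then show ?thesis using nc by blast
    next
      case False
      then obtain y where "y \<in> Y" "y \<notin> {1..p}" by blast
      moreover then have "1 \<le> y" using YU by auto
      ultimately have "p < y" by auto
      then show ?thesis using \<open>y \<in> Y\<close> by blast
    qed
    then consider (a) y where "y \<in> Y" "p < y" | (b) x where "x \<in> {1..t}" "x \<notin> Y" "Y \<subseteq> {1..p}"
      by blast
    then have "sum L ({1..j} - Y) < sum L (Y - {1..j})"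
    proof cases
      case a
      have "y \<le> n" using a YU by auto
      then have "p < n" using a by simp
      then have "L p < L (p + 1)" using gr by simp
      moreover have "L (p + 1) \<le> L y" using a \<open>y \<le> n\<close> by (intro L_mono) auto
      moreover have "L j \<le> L p" using j1 jp pn by (intro L_mono) auto
      ultimately have "L j < L y" by simp
      moreover have "y \<in> Y - {1..j}" using a jp by auto
      ultimately have "card (Y - {1..j}) * L j < sum L (Y - {1..j})"
        by (intro sum_gt_card[OF fin(1) ex(3)]) auto
      then show ?thesis using lo ex(2) by simp
    next
      case b
      have xJ: "x \<in> {1..j} - Y" using b tj by auto
      have "t < j"
      proof (rule ccontr)
        assume "\<not> t < j"
        then have "t = p" "j = t" using tjp tj by auto
        have "card ({1..j} - Y) > 0" using xJ by (auto simp: card_gt_0_iff)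
        then have "Y - {1..j} \<noteq> {}" using ex(2) by (metis card.empty less_irrefl)
        then show False using b \<open>t = p\<close> \<open>j = t\<close> by auto
      qed
      have "t \<noteq> 0" using b by auto
      then have "L t < L (t + 1)" using gl by simp
      moreover have "L x \<le> L t" using b tj jp pn by (intro L_mono) auto
      moreover have "L (t + 1) \<le> L j" using \<open>t < j\<close> ex(5) by (intro L_mono) auto
      ultimately have "L x < L j" by simp
      then have "sum L ({1..j} - Y) < card ({1..j} - Y) * L j"
        by (intro sum_lt_card[OF fin(2) ex(4) xJ])
      then show ?thesis using hi ex(2) by simp
    qed
    then show ?thesis using ex(1) unfolding S_def by simp
  qed
  have F4: "(\<Sum>Y\<in>Mn. \<Prod>i\<in>Y. lt i) = (\<Prod>i=1..t. lt i) * esym {t+1..p} lt (j - t)"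
  proof -
    have inj: "inj_on (\<lambda>Y'. {1..t} \<union> Y') M"
    proof (rule inj_onI)
      fix A B assume "A \<in> M" "B \<in> M" "{1..t} \<union> A = {1..t} \<union> B"
      then have "({1..t} \<union> A) - {1..t} = ({1..t} \<union> B) - {1..t}" by simp
      moreover have "({1..t} \<union> A) - {1..t} = A" "({1..t} \<union> B) - {1..t} = B"
        using \<open>A \<in> M\<close> \<open>B \<in> M\<close> unfolding M_def by auto
      ultimately show "A = B" by simp
    qed
    have "(\<Sum>Y\<in>Mn. \<Prod>i\<in>Y. lt i) = (\<Sum>Y'\<in>M. \<Prod>i\<in>{1..t} \<union> Y'. lt i)"
      unfolding Mn_def using sum.reindex[OF inj, of "\<lambda>Y. \<Prod>i\<in>Y. lt i"] by (simp add: comp_def)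
    also have "\<dots> = (\<Sum>Y'\<in>M. (\<Prod>i=1..t. lt i) * (\<Prod>i\<in>Y'. lt i))"
    proof (rule sum.cong[OF refl])
      fix Y' assume "Y' \<in> M"
      then have "finite Y'" "{1..t} \<inter> Y' = {}" unfolding M_def by (auto dest: finite_subset)
      then show "(\<Prod>i\<in>{1..t} \<union> Y'. lt i) = (\<Prod>i=1..t. lt i) * (\<Prod>i\<in>Y'. lt i)"
        by (simp add: prod.union_disjoint)
    qed
    also have "\<dots> = (\<Prod>i=1..t. lt i) * esym {t+1..p} lt (j - t)"
      by (simp add: esym_def M_def sum_distrib_left)
    finally show ?thesis .
  qed
  define P where "P = (\<lambda>Y \<epsilon>. \<Prod>i\<in>Y. lam i (\<epsilon>::real))"
  have PY: "(\<lambda>\<epsilon>. P Y \<epsilon> - \<epsilon> ^ (sum L Y) * (\<Prod>i\<in>Y. lt i)) \<in> O[at 0](\<lambda>\<epsilon>. \<epsilon> ^ (sum L Y + 1))"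
    if "Y \<in> U" for Y
  proof -
    have "Y \<subseteq> {1..n}" "finite Y" using that unfolding U_def by (auto dest: finite_subset)
    then show ?thesis unfolding P_def by (intro prod_asym lam_asym) auto
  qed
  have G1: "(\<lambda>\<epsilon>. P Y \<epsilon> - \<epsilon> ^ S * (\<Prod>i\<in>Y. lt i)) \<in> O[at 0](\<lambda>\<epsilon>. \<epsilon> ^ (S + 1))"
    if "Y \<in> Mn" for Y
    using PY[of Y] that MnU F2[OF that] by auto
  have G2: "(\<lambda>\<epsilon>. P Y \<epsilon>) \<in> O[at 0](\<lambda>\<epsilon>. \<epsilon> ^ (S + 1))"
    if "Y \<in> U - Mn" for Y
  proof -
    have YU: "Y \<in> U" using that by blast
    have a: "(\<lambda>\<epsilon>::real. \<epsilon> ^ (sum L Y + 1)) \<in> O[at 0](\<lambda>\<epsilon>. \<epsilon> ^ (sum L Y))"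
      using pow_bigo[of "sum L Y" "sum L Y + 1"] by simp
    have b: "(\<lambda>\<epsilon>::real. \<epsilon> ^ (sum L Y)) \<in> O[at 0](\<lambda>\<epsilon>. \<epsilon> ^ (S + 1))"
      using pow_bigo F3[OF that] by blast
    have "(\<lambda>\<epsilon>. (P Y \<epsilon> - \<epsilon> ^ (sum L Y) * (\<Prod>i\<in>Y. lt i)) + \<epsilon> ^ (sum L Y) * (\<Prod>i\<in>Y. lt i)) \<in> O[at 0](\<lambda>\<epsilon>. \<epsilon> ^ (sum L Y))"
      by (rule sum_in_bigo(1)[OF landau_o.big_trans[OF PY[OF YU] a] const_pow_bigo])
    then have "(\<lambda>\<epsilon>. P Y \<epsilon>) \<in> O[at 0](\<lambda>\<epsilon>. \<epsilon> ^ (sum L Y))" by simp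
    then show ?thesis using b by (rule landau_o.big_trans)
  qed
  have esplit: "esym {1..n} (\<lambda>i. lam i \<epsilon>) j = (\<Sum>Y\<in>Mn. P Y \<epsilon>) + (\<Sum>Y\<in>U - Mn. P Y \<epsilon>)" for \<epsilon>
  proof -
    have "esym {1..n} (\<lambda>i. lam i \<epsilon>) j = (\<Sum>Y\<in>U. P Y \<epsilon>)" unfolding esym_def U_def P_def by simp
    also have "\<dots> = (\<Sum>Y\<in>U - Mn. P Y \<epsilon>) + (\<Sum>Y\<in>Mn. P Y \<epsilon>)" by (rule sum.subset_diff[OF MnU fU])
    finally show ?thesis by simp
  qed
  define c where "c = (\<Sum>Y\<in>Mn. \<Prod>i\<in>Y. lt i)"
  have H1: "(\<lambda>\<epsilon>. (\<Sum>Y\<in>Mn. P Y \<epsilon> - \<epsilon> ^ S * (\<Prod>i\<in>Y. lt i)) + (\<Sum>Y\<in>U - Mn. P Y \<epsilon>)) \<in> O[at 0](\<lambda>\<epsilon>. \<epsilon> ^ (S + 1))"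
  proof (rule sum_in_bigo(1))
    show "(\<lambda>\<epsilon>. \<Sum>Y\<in>Mn. P Y \<epsilon> - \<epsilon> ^ S * (\<Prod>i\<in>Y. lt i)) \<in> O[at 0](\<lambda>\<epsilon>. \<epsilon> ^ (S + 1))"
      by (rule big_sum_in_bigo) (rule G1)
    show "(\<lambda>\<epsilon>. \<Sum>Y\<in>U - Mn. P Y \<epsilon>) \<in> O[at 0](\<lambda>\<epsilon>. \<epsilon> ^ (S + 1))"
      by (rule big_sum_in_bigo) (rule G2)
  qed
  have "(\<lambda>\<epsilon>. (\<Sum>Y\<in>Mn. P Y \<epsilon> - \<epsilon> ^ S * (\<Prod>i\<in>Y. lt i)) + (\<Sum>Y\<in>U - Mn. P Y \<epsilon>))
      = (\<lambda>\<epsilon>. esym {1..n} (\<lambda>i. lam i \<epsilon>) j - \<epsilon> ^ S * c)"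
    by (rule ext, unfold esplit c_def sum_subtractf sum_distrib_left) simp
  with H1 have H2: "(\<lambda>\<epsilon>. esym {1..n} (\<lambda>i. lam i \<epsilon>) j - \<epsilon> ^ S * c) \<in> O[at 0](\<lambda>\<epsilon>. \<epsilon> ^ (S + 1))" by simp
  have H3: "(\<lambda>\<epsilon>. esym {1..n} (\<lambda>i. lam i \<epsilon>) j - \<epsilon> ^ S * et j) \<in> O[at 0](\<lambda>\<epsilon>. \<epsilon> ^ (S + 1))"
    using e_asym[OF j1] jp pn unfolding S_def by simp
  have "(\<lambda>\<epsilon>. (esym {1..n} (\<lambda>i. lam i \<epsilon>) j - \<epsilon> ^ S * c) - (esym {1..n} (\<lambda>i. lam i \<epsilon>) j - \<epsilon> ^ S * et j)) \<in> O[at 0](\<lambda>\<epsilon>. \<epsilon> ^ (S + 1))"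
    by (rule sum_in_bigo(2)[OF H2 H3])
  moreover have "(\<lambda>\<epsilon>. (esym {1..n} (\<lambda>i. lam i \<epsilon>) j - \<epsilon> ^ S * c) - (esym {1..n} (\<lambda>i. lam i \<epsilon>) j - \<epsilon> ^ S * et j))
     = (\<lambda>\<epsilon>::real. \<epsilon> ^ S * (et j - c))"
    by (rule ext) (simp add: right_diff_distrib)
  ultimately have "(\<lambda>\<epsilon>::real. \<epsilon> ^ S * (et j - c)) \<in> O[at 0](\<lambda>\<epsilon>. \<epsilon> ^ (S + 1))"
    by simp
  then have "et j - c = 0" by (rule coeff_zero)
  then show ?thesis using F4 c_def by simp
qed

theorem lemma3p4:
  fixes n s m :: nat
    and lam :: "nat \<Rightarrow> real \<Rightarrow> real"
    and L :: "nat \<Rightarrow> nat"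
    and lt :: "nat \<Rightarrow> real"
    and et :: "nat \<Rightarrow> real"
  assumes L_mono: "\<And>i j. 1 \<le> i \<Longrightarrow> i \<le> j \<Longrightarrow> j \<le> n \<Longrightarrow> L i \<le> L j"
    and lam_asym: "\<And>k. 1 \<le> k \<Longrightarrow> k \<le> n \<Longrightarrow>
        (\<lambda>\<epsilon>. lam k \<epsilon> - \<epsilon> ^ L k * lt k) \<in> O[at 0](\<lambda>\<epsilon>. \<epsilon> ^ (L k + 1))"
    and e_asym: "\<And>j. 1 \<le> j \<Longrightarrow> j \<le> n \<Longrightarrow>
        (\<lambda>\<epsilon>. esym {1..n} (\<lambda>i. lam i \<epsilon>) j - \<epsilon> ^ (\<Sum>i=1..j. L i) * et j)
          \<in> O[at 0](\<lambda>\<epsilon>. \<epsilon> ^ ((\<Sum>i=1..j. L i) + 1))"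
    and m_pos: "1 \<le> m" and sm_le: "s + m \<le> n"
    and gap_left: "s = 0 \<or> L s < L (s + 1)"
    and block: "\<And>i. s + 1 \<le> i \<Longrightarrow> i \<le> s + m \<Longrightarrow> L i = L (s + 1)"
    and gap_right: "s + m = n \<or> L (s + m) < L (s + m + 1)"
  shows "(\<forall>k\<in>{1..m}.
            et (s + k) = (\<Prod>i=1..s. lt i) * esym {s+1..s+m} lt k \<and>
            (s > 0 \<longrightarrow> et (s + k) = et s * esym {s+1..s+m} lt k))
       \<and> ((s > 1 \<and> et s \<noteq> 0) \<longrightarrow>
            (\<forall>k\<in>{1..m}. esym {s+1..s+m} lt k = et (s + k) / et s) \<and>
            (\<Sum>j\<le>m. monom ((-1) ^ j * et (s + j)) (m - j))
              = smult (et s) (\<Prod>i=s+1..s+m. [:- lt i, 1:]))"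
proof -
  have A: "et (s + k) = (\<Prod>i=1..s. lt i) * esym {s+1..s+m} lt k" if "k \<in> {1..m}" for k
  proof -
    have "et (s + k) = (\<Prod>i=1..s. lt i) * esym {s+1..s+m} lt (s + k - s)"
    proof (rule key[where L=L and n=n, OF L_mono lam_asym e_asym _ _ _ _ _ _ _ block])
      show "s \<le> s + k" "s + k \<le> s + m" "s + m \<le> n" "1 \<le> s + k" "s < s + k \<or> s = s + m"
        using that sm_le by auto
      show "s = 0 \<or> L s < L (s + 1)" by (rule gap_left)
      show "s + m = n \<or> L (s + m) < L (s + m + 1)" by (rule gap_right)
    qed
    then show ?thesis by simp
  qed
  have B: "et s = (\<Prod>i=1..s. lt i)" if "s > 0"
  proof -
    have gl: "L s < L (s + 1)" using gap_left that by simp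
    have "et s = (\<Prod>i=1..s. lt i) * esym {s+1..s} lt (s - s)"
    proof (rule key[where L=L and n=n, OF L_mono lam_asym e_asym])
      show "s \<le> s" "s \<le> s" "s \<le> n" "1 \<le> s" "s < s \<or> s = s"
        using that sm_le by auto
      show "s = 0 \<or> L s < L (s + 1)" using gl by simp
      show "s = n \<or> L s < L (s + 1)" using gl by simp
      show "\<And>i. s + 1 \<le> i \<Longrightarrow> i \<le> s \<Longrightarrow> L i = L (s + 1)" by simp
    qed
    then show ?thesis by (simp add: esym0)
  qed
  have C: "et (s + k) = et s * esym {s+1..s+m} lt k" if "s > 0" "k \<le> m" for k
  proof (cases "k = 0")
    case True
    then show ?thesis by (simp add: esym0)
  next
    case False
    then show ?thesis using A[of k] B[OF that(1)] that by simp
  qed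
  have P1: "\<forall>k\<in>{1..m}. et (s + k) = (\<Prod>i=1..s. lt i) * esym {s+1..s+m} lt k \<and>
            (s > 0 \<longrightarrow> et (s + k) = et s * esym {s+1..s+m} lt k)"
    using A C by auto
  have P2: "(\<forall>k\<in>{1..m}. esym {s+1..s+m} lt k = et (s + k) / et s) \<and>
            (\<Sum>j\<le>m. monom ((-1) ^ j * et (s + j)) (m - j))
              = smult (et s) (\<Prod>i=s+1..s+m. [:- lt i, 1:])"
    if s1: "s > 1" and e0: "et s \<noteq> 0"
  proof
    show "\<forall>k\<in>{1..m}. esym {s+1..s+m} lt k = et (s + k) / et s"
      using C s1 e0 by auto
    have cB: "card {s+1..s+m} = m" by simp
    have "(\<Sum>j\<le>m. monom ((-1) ^ j * et (s + j)) (m - j))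
        = (\<Sum>j\<le>m. smult (et s) (monom ((-1) ^ j * esym {s+1..s+m} lt j) (m - j)))"
    proof (rule sum.cong[OF refl])
      fix j assume "j \<in> {..m}"
      then show "monom ((-1) ^ j * et (s + j)) (m - j) = smult (et s) (monom ((-1) ^ j * esym {s+1..s+m} lt j) (m - j))"
        using C[of j] s1 by (simp add: smult_monom mult_ac)
    qed
    also have "\<dots> = smult (et s) (\<Sum>j\<le>m. monom ((-1) ^ j * esym {s+1..s+m} lt j) (m - j))"
      by (simp add: smult_sum2)
    also have "(\<Sum>j\<le>m. monom ((-1) ^ j * esym {s+1..s+m} lt j) (m - j)) = (\<Prod>i=s+1..s+m. [:- lt i, 1:])"
      using vieta[of "{s+1..s+m}" lt] cB by simp
    finally show "(\<Sum>j\<le>m. monom ((-1) ^ j * et (s + j)) (m - j))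
              = smult (et s) (\<Prod>i=s+1..s+m. [:- lt i, 1:])" .
  qed
  show ?thesis using P1 P2 by blast
qed
end
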